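(* Let $\mathbb{F}$ be a field of characteristic $2$. Every triangle in $\widetilde H_3(\mathbb{F})$ has voltage $U$ with respect to $\ell$; i.e. for pairwise adjacent vertices $a,b,c$ we have $\ell(a,b)+\ell(b,c)+\ell(c,a)=U$.
   Context: Let $V=\mathbb{F}^4$, $V^*$ its dual. $\widetilde H_3(\mathbb{F})$ is the graph whose vertices are tensors $v\otimes f\in V\otimes V^*$ with $f(v)\neq0$, with $v\otimes f\perp w\otimes g$ iff $f(w)=g(v)=0$. Let $W=\bigwedge^2V$, fix an isomorphism $\chi:\bigwedge^4V\to\mathbb{F}$, identify $\bigwedge^2V^*$ with $(\bigwedge^2V)^*$ via $(f_1\wedge f_2)(v_1\wedge v_2)=f_1(v_1)f_2(v_2)-f_1(v_2)f_2(v_1)$, let $\psi:\bigwedge^2V\to\bigwedge^2V^*$ be $\psi(\hat w)(\hat v)=\chi(\hat v\wedge\hat w)$ and $\phi=\psi^{-1}$. $S_2(W)$ is the symmetric square of $W$ (product $ab$). $U=(w\wedge x)(y\wedge z)+(w\wedge y)(z\wedge x)+(w\wedge z)(x\wedge y)\in S_2(W)$ for any $w,x,y,z\in V$ with $\chi(w\wedge x\wedge y\wedge z)=1$ (independent of the choice). $\ell$ assigns to the dart from $v_1\otimes h_1$ to $v_2\otimes h_2$ the element $h_1(v_1)^{-1}h_2(v_2)^{-1}(v_1\wedge v_2)\,\phi(h_1\wedge h_2)$ of $S_2(W)$; the voltage of a closed walk is the sum of the voltages of its darts. *)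

theory Defs
  imports "HOL-Analysis.Finite_Cartesian_Product" "HOL-Library.Numeral_Type"
begin

text \<open>V = F^4 is the type 'f^4, V* is also 'f^4 with the
standard pairing.  An element of W = wedge^2 V (and of wedge^2 V*) is represented
by its alternating coordinate matrix: v wedge w has (i,j) entry v_i w_j - v_j w_i.\<close>

definition pairing :: "'f::field ^ 4 \<Rightarrow> 'f ^ 4 \<Rightarrow> 'f" where
  "pairing f v = (\<Sum>i\<in>UNIV. f $ i * v $ i)"

definition wedge :: "'f::field ^ 4 \<Rightarrow> 'f ^ 4 \<Rightarrow> 'f ^ 4 ^ 4" where
  "wedge v w = (\<chi> i j. v $ i * w $ j - v $ j * w $ i)"

definition alternating :: "'f::field ^ 4 ^ 4 \<Rightarrow> bool" where
  "alternating A \<longleftrightarrow> (\<forall>i j. A $ i $ j = - A $ j $ i) \<and> (\<forall>i. A $ i $ i = 0)"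

text \<open>The pairing of wedge^2 V* with wedge^2 V, in coordinates (Cauchy--Binet);
it satisfies (f1 wedge f2)(v1 wedge v2) = f1(v1) f2(v2) - f1(v2) f2(v1).\<close>
definition pair2 :: "'f::field ^ 4 ^ 4 \<Rightarrow> 'f ^ 4 ^ 4 \<Rightarrow> 'f" where
  "pair2 A X = (\<Sum>(i,j)\<in>{(i,j). i < j}. A $ i $ j * X $ i $ j)"

text \<open>Coefficient of e0 wedge e1 wedge e2 wedge e3 in X wedge Y, for 2-vectors X, Y.\<close>
definition wedge22 :: "'f::field ^ 4 ^ 4 \<Rightarrow> 'f ^ 4 ^ 4 \<Rightarrow> 'f" where
  "wedge22 X Y =
     X$0$1 * Y$2$3 - X$0$2 * Y$1$3 + X$0$3 * Y$1$2
   + X$1$2 * Y$0$3 - X$1$3 * Y$0$2 + X$2$3 * Y$0$1"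

text \<open>An isomorphism chi: wedge^4 V -> F is multiplication of that coefficient by a
nonzero constant c.  chi applied to X wedge Y:\<close>
definition chi2 :: "'f::field \<Rightarrow> 'f ^ 4 ^ 4 \<Rightarrow> 'f ^ 4 ^ 4 \<Rightarrow> 'f" where
  "chi2 c X Y = c * wedge22 X Y"

text \<open>phi = psi^{-1}, where psi(B)(X) = chi(X wedge B).\<close>
definition phi :: "'f::field \<Rightarrow> 'f ^ 4 ^ 4 \<Rightarrow> 'f ^ 4 ^ 4" where
  "phi c \<alpha> = (THE B. alternating B \<and> (\<forall>X. alternating X \<longrightarrow> chi2 c X B = pair2 \<alpha> X))"

text \<open>S_2(W): degree-2 monomials in the basis e_i wedge e_j (i<j) of W.  An element is
a function C on pairs of basis indices, C p q = coefficient of the monomial p*q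
(C p p = coefficient of p^2), symmetric, and zero off the basis indices.\<close>
type_synonym 'f s2 = "(4 \<times> 4) \<Rightarrow> (4 \<times> 4) \<Rightarrow> 'f"

definition wbasis :: "(4 \<times> 4) set" where
  "wbasis = {(i,j). i < j}"

definition s2mul :: "'f::field ^ 4 ^ 4 \<Rightarrow> 'f ^ 4 ^ 4 \<Rightarrow> 'f s2" where
  "s2mul a b = (\<lambda>p q. if p \<in> wbasis \<and> q \<in> wbasis then
       (if p = q then a $ fst p $ snd p * b $ fst p $ snd p
        else a $ fst p $ snd p * b $ fst q $ snd q + a $ fst q $ snd q * b $ fst p $ snd p)
     else 0)"

definition s2add :: "'f::field s2 \<Rightarrow> 'f s2 \<Rightarrow> 'f s2" where
  "s2add x y = (\<lambda>p q. x p q + y p q)"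

definition s2scale :: "'f::field \<Rightarrow> 'f s2 \<Rightarrow> 'f s2" where
  "s2scale k x = (\<lambda>p q. k * x p q)"

text \<open>Vertices of H3~: represented by pairs (v,f) with f(v) nonzero (standing for v (x) f).\<close>
definition is_vertex :: "('f::field ^ 4) \<times> ('f ^ 4) \<Rightarrow> bool" where
  "is_vertex a \<longleftrightarrow> pairing (snd a) (fst a) \<noteq> 0"

definition adj :: "('f::field ^ 4) \<times> ('f ^ 4) \<Rightarrow> ('f ^ 4) \<times> ('f ^ 4) \<Rightarrow> bool" where
  "adj a b \<longleftrightarrow> pairing (snd a) (fst b) = 0 \<and> pairing (snd b) (fst a) = 0"

definition ell :: "'f::field \<Rightarrow> ('f ^ 4) \<times> ('f ^ 4) \<Rightarrow> ('f ^ 4) \<times> ('f ^ 4) \<Rightarrow> 'f s2" where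
  "ell c a b = s2scale (inverse (pairing (snd a) (fst a)) * inverse (pairing (snd b) (fst b)))
      (s2mul (wedge (fst a) (fst b)) (phi c (wedge (snd a) (snd b))))"

definition Uelt :: "'f::field ^ 4 \<Rightarrow> 'f ^ 4 \<Rightarrow> 'f ^ 4 \<Rightarrow> 'f ^ 4 \<Rightarrow> 'f s2" where
  "Uelt w x y z = s2add (s2add (s2mul (wedge w x) (wedge y z)) (s2mul (wedge w y) (wedge z x)))
      (s2mul (wedge w z) (wedge x y))"

end

theory Submission imports Defs "HOL-Analysis.Cartesian_Space" begin
lemma four0: "(4::4) = 0" by simp
lemma UNIV4: "(UNIV::4 set) = {0,1,2,3}"
  using UNIV_4 four0 by auto
lemma cases4: "(x::4) = 0 \<or> x = 1 \<or> x = 2 \<or> x = 3"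
  using UNIV4 by blast
lemma all4: "(\<forall>i::4. P i) \<longleftrightarrow> P 0 \<and> P 1 \<and> P 2 \<and> P 3"
  using cases4 by (metis (full_types))
lemma lt4: "(0::4) < 1" "(0::4) < 2" "(0::4) < 3" "(1::4) < 2" "(1::4) < 3" "(2::4) < 3"
  by (simp_all add: less_bit0_def bit0.Rep_numeral bit0.Rep_0 bit0.Rep_1)
lemma nlt4: "\<not> (1::4) < 0" "\<not> (2::4) < 0" "\<not> (3::4) < 0" "\<not> (2::4) < 1" "\<not> (3::4) < 1" "\<not> (3::4) < 2"
  using lt4 by (simp_all add: not_less less_imp_le)
lemma wbasis_eq: "wbasis = {(0,1),(0,2),(0,3),(1,2),(1,3),(2,3)}"
proof -
  have "(i::4) < j \<longleftrightarrow> (i,j) \<in> {(0,1),(0,2),(0,3),(1,2),(1,3),(2,3)}" for i j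
    using cases4[of i] cases4[of j] by (elim disjE) (simp_all add: lt4 nlt4)
  then show ?thesis unfolding wbasis_def by auto
qed
lemma sum4: "sum f (UNIV::4 set) = f 0 + f 1 + f 2 + f 3"
  unfolding UNIV4 by (simp add: ac_simps)
lemma pair2_eq: "pair2 A X = A$0$1*X$0$1 + A$0$2*X$0$2 + A$0$3*X$0$3 + A$1$2*X$1$2 + A$1$3*X$1$3 + A$2$3*X$2$3"
  unfolding pair2_def using wbasis_eq unfolding wbasis_def by (simp add: ac_simps)

definition smat :: "'f::field \<Rightarrow> 'f^4^4 \<Rightarrow> 'f^4^4" where
  "smat k A = (\<chi> i j. k * A$i$j)"

definition hodge :: "'f::field^4^4 \<Rightarrow> 'f^4^4" where
  "hodge A = (\<chi> i j.
     if i = 0 \<and> j = 1 then A$2$3 else if i = 1 \<and> j = 0 then - A$2$3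
     else if i = 0 \<and> j = 2 then - A$1$3 else if i = 2 \<and> j = 0 then A$1$3
     else if i = 0 \<and> j = 3 then A$1$2 else if i = 3 \<and> j = 0 then - A$1$2
     else if i = 1 \<and> j = 2 then A$0$3 else if i = 2 \<and> j = 1 then - A$0$3
     else if i = 1 \<and> j = 3 then - A$0$2 else if i = 3 \<and> j = 1 then A$0$2
     else if i = 2 \<and> j = 3 then A$0$1 else if i = 3 \<and> j = 2 then - A$0$1
     else 0)"

lemma vec44_eqI:
  assumes "\<And>i j. A$i$j = B$i$j" shows "A = (B :: 'a^4^4)"
  using assms by (simp add: vec_eq_iff)

lemma alt_wedge: "alternating (wedge v w)"
  unfolding alternating_def wedge_def by simp

lemma phi_eq:
  fixes c :: "'f::field"
  assumes c: "c \<noteq> 0"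
  shows "phi c A = smat (inverse c) (hodge A)"
  unfolding phi_def
proof (rule the_equality)
  show "alternating (smat (inverse c) (hodge A)) \<and>
    (\<forall>X. alternating X \<longrightarrow> chi2 c X (smat (inverse c) (hodge A)) = pair2 A X)"
  proof
    show "alternating (smat (inverse c) (hodge A))"
      unfolding alternating_def smat_def hodge_def all4 by simp
    show "\<forall>X. alternating X \<longrightarrow> chi2 c X (smat (inverse c) (hodge A)) = pair2 A X"
      using c by (simp add: chi2_def wedge22_def smat_def hodge_def pair2_eq field_simps)
  qed
next
  fix B assume B: "alternating B \<and> (\<forall>X. alternating X \<longrightarrow> chi2 c X B = pair2 A X)"
  define e :: "4 \<Rightarrow> 'f^4" where "e i = axis i 1" for i
  have h: "c * wedge22 (wedge (e i) (e j)) B = pair2 A (wedge (e i) (e j))" for i j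
    using B alt_wedge unfolding chi2_def by blast
  have eqs: "c * B$2$3 = A$0$1" "- (c * B$1$3) = A$0$2" "c * B$1$2 = A$0$3"
     "c * B$0$3 = A$1$2" "- (c * B$0$2) = A$1$3" "c * B$0$1 = A$2$3"
    using h[of 0 1] h[of 0 2] h[of 0 3] h[of 1 2] h[of 1 3] h[of 2 3]
    by (simp_all add: wedge22_def pair2_eq wedge_def e_def axis_def)
  have alt: "B$i$j = - B$j$i" "B$i$i = 0" for i j
    using B unfolding alternating_def by blast+
  show "B = smat (inverse c) (hodge A)"
  proof (rule vec44_eqI)
    fix i j :: 4
    show "B$i$j = smat (inverse c) (hodge A) $i$j"
      using cases4[of i] cases4[of j] eqs alt(1)[of i j] alt(1)[of j i] alt(2)[of i] c
      by (elim disjE) (auto simp: smat_def hodge_def field_simps)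
  qed
qed

definition m3 :: "'f::field^4 \<Rightarrow> 'f^4 \<Rightarrow> 'f^4 \<Rightarrow> 4 \<Rightarrow> 4 \<Rightarrow> 4 \<Rightarrow> 'f" where
  "m3 a b c i j k = a$i*(b$j*c$k - b$k*c$j) - a$j*(b$i*c$k - b$k*c$i) + a$k*(b$i*c$j - b$j*c$i)"

definition kstar :: "'f::field^4 \<Rightarrow> 'f^4 \<Rightarrow> 'f^4 \<Rightarrow> 'f^4" where
  "kstar a b c = (\<chi> l. if l = 0 then m3 a b c 1 2 3 else if l = 1 then - m3 a b c 0 2 3
      else if l = 2 then m3 a b c 0 1 3 else - m3 a b c 0 1 2)"

lemma kstar_cyc: "kstar b c a = kstar a b c"
  unfolding vec_eq_iff all4 kstar_def m3_def by (simp; algebra)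

lemma L1_gen_all:
  "\<forall>i j. pairing h3 v * hodge (wedge h1 h2) $i$j - pairing h2 v * hodge (wedge h1 h3) $i$j
   + pairing h1 v * hodge (wedge h2 h3) $i$j = wedge (kstar h1 h2 h3) v $i$j"
  unfolding all4
  apply (simp add: pairing_def sum4 hodge_def wedge_def kstar_def m3_def)
  apply (intro conjI)
  apply algebra+
  done
lemmas L1_gen = L1_gen_all[rule_format]

lemma L1:
  assumes "pairing h1 v = 0" "pairing h2 v = 0"
  shows "smat (pairing h3 v) (hodge (wedge h1 h2)) = wedge (kstar h1 h2 h3) v"
proof (rule vec44_eqI)
  fix i j
  show "smat (pairing h3 v) (hodge (wedge h1 h2)) $i$j = wedge (kstar h1 h2 h3) v $i$j"
    using L1_gen[of h3 v h1 h2 i j] assms by (simp add: smat_def)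
qed

lemma det_id:
  "wedge22 (wedge (kstar h1 h2 h3) v3) (wedge v1 v2) =
     pairing h1 v1 * (pairing h2 v2 * pairing h3 v3 - pairing h2 v3 * pairing h3 v2)
   - pairing h1 v2 * (pairing h2 v1 * pairing h3 v3 - pairing h2 v3 * pairing h3 v1)
   + pairing h1 v3 * (pairing h2 v1 * pairing h3 v2 - pairing h2 v2 * pairing h3 v1)"
  unfolding wedge22_def wedge_def kstar_def m3_def pairing_def sum4
  apply simp
  apply algebra
  done

definition Estd :: "'f::field s2" where
  "Estd = Uelt (axis 0 1) (axis 1 1) (axis 2 1) (axis 3 1)"

definition s2ok :: "'f::field s2 \<Rightarrow> bool" where
  "s2ok X \<longleftrightarrow> (\<forall>p q. \<not> (p \<in> wbasis \<and> q \<in> wbasis) \<longrightarrow> X p q = 0)"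

lemma s2_eqI:
  assumes "s2ok X" "s2ok Y" "\<forall>p\<in>wbasis. \<forall>q\<in>wbasis. X p q = Y p q"
  shows "X = Y"
  using assms unfolding s2ok_def by (metis ext)

lemma s2ok_mul: "s2ok (s2mul A B)" unfolding s2ok_def s2mul_def by auto
lemma s2ok_add: "s2ok X \<Longrightarrow> s2ok Y \<Longrightarrow> s2ok (s2add X Y)" unfolding s2ok_def s2add_def by auto
lemma s2ok_scale: "s2ok X \<Longrightarrow> s2ok (s2scale k X)" unfolding s2ok_def s2scale_def by auto
lemma s2ok_U: "s2ok (Uelt w x y z)" unfolding Uelt_def by (intro s2ok_add s2ok_mul)

lemma claimA_all:
  "\<forall>p\<in>wbasis. \<forall>q\<in>wbasis. Uelt w x y z p q = s2scale (wedge22 (wedge w x) (wedge y z)) Estd p q"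
  unfolding wbasis_eq
  apply (simp add: Uelt_def Estd_def s2add_def s2scale_def s2mul_def wedge_def wedge22_def axis_def wbasis_eq)
  apply (intro conjI)
  apply algebra+
  done

lemma claimA: "Uelt w x y z = s2scale (wedge22 (wedge w x) (wedge y z)) Estd"
proof -
  have "s2ok (Estd :: 'a s2)" unfolding Estd_def by (rule s2ok_U)
  then show ?thesis by (rule s2_eqI[OF s2ok_U s2ok_scale claimA_all])
qed

lemma s2mul_comm: "s2mul A B = s2mul B A"
  unfolding s2mul_def by (auto simp: fun_eq_iff ac_simps)
lemma s2mul_smat: "s2mul A (smat k B) = s2scale k (s2mul A B)"
  unfolding s2mul_def s2scale_def smat_def by (auto simp: fun_eq_iff algebra_simps)
lemma s2scale_scale: "s2scale k (s2scale m X) = s2scale (k*m) X"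
  unfolding s2scale_def by (auto simp: fun_eq_iff algebra_simps)
lemma s2add_scale: "s2add (s2scale k X) (s2scale k Y) = s2scale k (s2add X Y)"
  unfolding s2scale_def s2add_def by (auto simp: fun_eq_iff algebra_simps)
lemma smat_smat: "smat k (smat m A) = smat (k*m) A"
  unfolding smat_def by (simp add: vec_eq_iff)
lemma smat_1: "smat 1 A = A"
  unfolding smat_def by (simp add: vec_eq_iff)

lemma hodge_solve:
  assumes "pairing h1 v = 0" "pairing h2 v = 0" "pairing h3 v \<noteq> 0"
  shows "hodge (wedge h1 h2) = smat (inverse (pairing h3 v)) (wedge (kstar h1 h2 h3) v)"
proof -
  have "smat (inverse (pairing h3 v)) (wedge (kstar h1 h2 h3) v) =
        smat (inverse (pairing h3 v)) (smat (pairing h3 v) (hodge (wedge h1 h2)))"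
    using L1[OF assms(1,2), of h3] by simp
  also have "\<dots> = hodge (wedge h1 h2)"
    using assms(3) by (simp add: smat_smat smat_1)
  finally show ?thesis by simp
qed

theorem lemma3p8:
  fixes c :: "'f::field"
    and a b d :: "('f ^ 4) \<times> ('f ^ 4)"
  assumes "CHAR('f) = 2"
    and "c \<noteq> 0"
    and "is_vertex a" "is_vertex b" "is_vertex d"
    and "adj a b" "adj b d" "adj d a"
  shows "\<forall>w x y z :: 'f ^ 4. chi2 c (wedge w x) (wedge y z) = 1 \<longrightarrow>
           s2add (s2add (ell c a b) (ell c b d)) (ell c d a) = Uelt w x y z"
proof (intro allI impI)
  fix w x y z :: "'f^4"
  assume wxyz: "chi2 c (wedge w x) (wedge y z) = 1"
  obtain v1 h1 where a: "a = (v1, h1)" by (cases a)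
  obtain v2 h2 where b: "b = (v2, h2)" by (cases b)
  obtain v3 h3 where d: "d = (v3, h3)" by (cases d)
  define n1 where "n1 = pairing h1 v1"
  define n2 where "n2 = pairing h2 v2"
  define n3 where "n3 = pairing h3 v3"
  have n: "n1 \<noteq> 0" "n2 \<noteq> 0" "n3 \<noteq> 0"
    using assms(3-5) by (auto simp: is_vertex_def a b d n1_def n2_def n3_def)
  have z: "pairing h1 v2 = 0" "pairing h2 v1 = 0" "pairing h2 v3 = 0" "pairing h3 v2 = 0"
     "pairing h3 v1 = 0" "pairing h1 v3 = 0"
    using assms(6-8) by (auto simp: adj_def a b d)
  define K where "K = kstar h1 h2 h3"
  have K2: "kstar h2 h3 h1 = K" unfolding K_def by (rule kstar_cyc)
  have K3: "kstar h3 h1 h2 = K" unfolding K_def by (metis kstar_cyc)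
  have H12: "hodge (wedge h1 h2) = smat (inverse n3) (wedge K v3)"
    using hodge_solve[of h1 v3 h2 h3] z n unfolding n3_def K_def by simp
  have H23: "hodge (wedge h2 h3) = smat (inverse n1) (wedge K v1)"
    using hodge_solve[of h2 v1 h3 h1] z n unfolding n1_def K2 by simp
  have H31: "hodge (wedge h3 h1) = smat (inverse n2) (wedge K v2)"
    using hodge_solve[of h3 v2 h1 h2] z n unfolding n2_def K3 by simp
  define k where "k = inverse n1 * inverse n2 * inverse n3 * inverse c"
  have E1: "ell c a b = s2scale k (s2mul (wedge K v3) (wedge v1 v2))"
    unfolding ell_def a b fst_conv snd_conv phi_eq[OF assms(2)] H12 smat_smat s2mul_smat
      s2scale_scale n1_def[symmetric] n2_def[symmetric]
    by (simp add: k_def s2mul_comm[of "wedge K v3"] mult_ac)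
  have E2: "ell c b d = s2scale k (s2mul (wedge K v1) (wedge v2 v3))"
    unfolding ell_def b d fst_conv snd_conv phi_eq[OF assms(2)] H23 smat_smat s2mul_smat
      s2scale_scale n3_def[symmetric] n2_def[symmetric]
    by (simp add: k_def s2mul_comm[of "wedge K v1"] mult_ac)
  have E3: "ell c d a = s2scale k (s2mul (wedge K v2) (wedge v3 v1))"
    unfolding ell_def a d fst_conv snd_conv phi_eq[OF assms(2)] H31 smat_smat s2mul_smat
      s2scale_scale n1_def[symmetric] n3_def[symmetric]
    by (simp add: k_def s2mul_comm[of "wedge K v2"] mult_ac)
  have D: "wedge22 (wedge K v3) (wedge v1 v2) = n1 * n2 * n3"
    unfolding K_def det_id z n1_def n2_def n3_def by simp
  have "s2add (s2add (ell c a b) (ell c b d)) (ell c d a) = s2scale k (Uelt K v3 v1 v2)"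
    unfolding E1 E2 E3 s2add_scale Uelt_def ..
  also have "\<dots> = s2scale (inverse c) Estd"
    unfolding claimA D s2scale_scale k_def using n
    by (simp add: field_simps)
  also have "\<dots> = Uelt w x y z"
  proof -
    have "wedge22 (wedge w x) (wedge y z) = inverse c"
      using wxyz assms(2) unfolding chi2_def by (simp add: field_simps)
    then show ?thesis by (simp add: claimA)
  qed
  finally show "s2add (s2add (ell c a b) (ell c b d)) (ell c d a) = Uelt w x y z" .
qed
end
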